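(* Let $S,M\subseteq X$ be disjoint, let $T\ge2$ be an even integer, and let $y=(y_0,y_1,\dots)$ be an infinite sequence in $X$ such that $y_0\in S$, $\mathrm{ct}\le T$, and $S_y[0,\mathrm{ht}]=1$. Set $r_S=T/2$. Then there exists $r_M\in R=\{1,2,4,\dots,2^{\lceil\log_2(14T)\rceil}\}$ such that, for $r=(r_S,r_M)$, \[ M_y^{(r)}[0,2T]\ge T/2\qquad\text{and}\qquad S_y^{(r)}[7T,15T]\ge T/4. \]
   Context: For a sequence $y$: $\mathrm{ht}=\min\{i\ge0:y_i\in M\}$ and $\mathrm{ct}=\min\{i>\mathrm{ht}:y_i\in S\}$. For positive integers $r=(r_S,r_M)$, $\gamma^{(r)}$ is the sequence obtained from $y$ by replacing each entry lying in $S$ by $r_S$ consecutive copies of it and each entry lying in $M$ by $r_M$ consecutive copies (other entries unchanged), indexed from $0$. For integers $a<b$, $M_y^{(r)}[a,b]=|\{t\in\{a,\dots,b\}:\gamma^{(r)}_t\in M\}|$ and $S_y^{(r)}[a,b]=|\{t\in\{a,\dots,b\}:\gamma^{(r)}_t\in S\}|$; when $r=(1,1)$ the superscript is omitted (so $\gamma^{(1,1)}=y$). *)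

theory Defs
  imports Complex_Main
begin

definition ht :: "(nat \<Rightarrow> 'a) \<Rightarrow> 'a set \<Rightarrow> nat" where
  "ht y M = (LEAST i. y i \<in> M)"

definition ct :: "(nat \<Rightarrow> 'a) \<Rightarrow> 'a set \<Rightarrow> 'a set \<Rightarrow> nat" where
  "ct y S M = (LEAST i. ht y M < i \<and> y i \<in> S)"

text \<open>Block length of entry j in the stretched sequence.\<close>
definition blen :: "(nat \<Rightarrow> 'a) \<Rightarrow> 'a set \<Rightarrow> 'a set \<Rightarrow> nat \<Rightarrow> nat \<Rightarrow> nat \<Rightarrow> nat" where
  "blen y S M rS rM j = (if y j \<in> S then rS else if y j \<in> M then rM else 1)"

definition bstart :: "(nat \<Rightarrow> 'a) \<Rightarrow> 'a set \<Rightarrow> 'a set \<Rightarrow> nat \<Rightarrow> nat \<Rightarrow> nat \<Rightarrow> nat" where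
  "bstart y S M rS rM j = (\<Sum>i<j. blen y S M rS rM i)"

text \<open>gamma^(r)_t: the entry of y whose block contains position t.\<close>
definition gamma :: "(nat \<Rightarrow> 'a) \<Rightarrow> 'a set \<Rightarrow> 'a set \<Rightarrow> nat \<Rightarrow> nat \<Rightarrow> nat \<Rightarrow> 'a" where
  "gamma y S M rS rM t = y (LEAST j. t < bstart y S M rS rM (Suc j))"

definition Mcount :: "(nat \<Rightarrow> 'a) \<Rightarrow> 'a set \<Rightarrow> 'a set \<Rightarrow> nat \<Rightarrow> nat \<Rightarrow> nat \<Rightarrow> nat \<Rightarrow> nat" where
  "Mcount y S M rS rM a b = card {t \<in> {a..b}. gamma y S M rS rM t \<in> M}"

definition Scount :: "(nat \<Rightarrow> 'a) \<Rightarrow> 'a set \<Rightarrow> 'a set \<Rightarrow> nat \<Rightarrow> nat \<Rightarrow> nat \<Rightarrow> nat \<Rightarrow> nat" where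
  "Scount y S M rS rM a b = card {t \<in> {a..b}. gamma y S M rS rM t \<in> S}"

end

theory Submission
  imports Defs
begin

lemma bstart_Suc: "bstart y S M rS rM (Suc j) = bstart y S M rS rM j + blen y S M rS rM j"
  by (simp add: bstart_def)

lemma bstart_mono: "i \<le> j \<Longrightarrow> bstart y S M rS rM i \<le> bstart y S M rS rM j"
  unfolding bstart_def by (rule sum_mono2) auto

lemma gamma_block:
  assumes "bstart y S M rS rM j \<le> t" "t < bstart y S M rS rM (Suc j)"
  shows "gamma y S M rS rM t = y j"
proof -
  have "(LEAST j'. t < bstart y S M rS rM (Suc j')) = j"
  proof (rule Least_equality)
    show "t < bstart y S M rS rM (Suc j)" by fact
    fix j' assume a: "t < bstart y S M rS rM (Suc j')"
    show "j \<le> j'"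
    proof (rule ccontr)
      assume "\<not> j \<le> j'"
      then have "Suc j' \<le> j" by simp
      hence "bstart y S M rS rM (Suc j') \<le> bstart y S M rS rM j" by (rule bstart_mono)
      with assms a show False by simp
    qed
  qed
  thus ?thesis by (simp add: gamma_def)
qed

lemma count_lt:
  "card {t \<in> {..<bstart y S M rS rM b}. P (gamma y S M rS rM t)}
     = (\<Sum>j<b. if P (y j) then blen y S M rS rM j else 0)"
proof (induction b)
  case 0
  then show ?case by (simp add: bstart_def)
next
  case (Suc b)
  let ?B = "bstart y S M rS rM"
  let ?A = "{t \<in> {..<?B b}. P (gamma y S M rS rM t)}"
  let ?C = "{t \<in> {?B b..<?B (Suc b)}. P (gamma y S M rS rM t)}"
  have le: "?B b \<le> ?B (Suc b)" by (rule bstart_mono) simp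
  have eq: "{t \<in> {..<?B (Suc b)}. P (gamma y S M rS rM t)} = ?A \<union> ?C"
    using le by auto
  have C: "?C = (if P (y b) then {?B b..<?B (Suc b)} else {})"
    using gamma_block[of y S M rS rM b] by auto
  have "card (?A \<union> ?C) = card ?A + card ?C"
    by (rule card_Un_disjoint) auto
  also have "card ?C = (if P (y b) then blen y S M rS rM b else 0)"
    unfolding C by (simp add: bstart_Suc)
  finally show ?case using eq Suc by simp
qed

theorem mainTheorem9:
  fixes S M :: "'a set" and y :: "nat \<Rightarrow> 'a" and T :: nat
  assumes "S \<inter> M = {}"
    and "T \<ge> 2" and "even T"
    and "y 0 \<in> S"
    and "\<exists>i. y i \<in> M"
    and "\<exists>i. ht y M < i \<and> y i \<in> S"
    and "ct y S M \<le> T"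
    and "Scount y S M 1 1 0 (ht y M) = 1"
  shows "\<exists>rM \<in> {2 ^ k | k :: nat. int k \<le> \<lceil>log 2 (14 * real T)\<rceil>}.
           real (Mcount y S M (T div 2) rM 0 (2 * T)) \<ge> real T / 2 \<and>
           real (Scount y S M (T div 2) rM (7 * T) (15 * T)) \<ge> real T / 4"
proof -
  let ?h = "ht y M"
  let ?c = "ct y S M"
  have hM: "y ?h \<in> M" unfolding ht_def using assms(5) by (rule LeastI_ex)
  have cS: "?h < ?c \<and> y ?c \<in> S" unfolding ct_def using assms(6) by (rule LeastI_ex)
  have cmin: "\<And>i. ?h < i \<Longrightarrow> i < ?c \<Longrightarrow> y i \<notin> S"
    using not_less_Least[of _ "\<lambda>i. ?h < i \<and> y i \<in> S"] unfolding ct_def by blast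
  have h0: "0 < ?h" using hM assms(1,4) by (cases "?h") auto
  have bl1: "\<And>j. blen y S M 1 1 j = 1" unfolding blen_def by simp
  have B1: "\<And>j. bstart y S M 1 1 j = j" unfolding bstart_def bl1 by simp
  have g1: "\<And>t. gamma y S M 1 1 t = y t" using gamma_block[of y S M 1 1] B1 by simp
  have noS: "y j \<notin> S" if "0 < j" "j \<le> ?h" for j
  proof
    assume "y j \<in> S"
    have "{0, j} \<subseteq> {t \<in> {0..?h}. gamma y S M 1 1 t \<in> S}" using g1 assms(4) that \<open>y j \<in> S\<close> by auto
    hence "card {0,j} \<le> Scount y S M 1 1 0 ?h" unfolding Scount_def by (intro card_mono) auto
    with assms(8) \<open>0<j\<close> show False by simp
  qed
  have noS2: "\<And>j. 0<j \<Longrightarrow> j < ?c \<Longrightarrow> y j \<notin> S" using noS cmin by (metis not_less)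
  obtain q where q: "T = 2*q" using assms(3) by blast
  define rS where "rS = T div 2"
  have rSq: "rS = q" using q by (simp add: rS_def)
  have q1: "q \<ge> 1" using q assms(2) by simp
  define m where "m = card {j \<in> {..<?c}. y j \<in> M}"
  define c0 where "c0 = (\<Sum>j<?c. if y j \<notin> M then blen y S M rS 1 j else 0)"
  have c0_eq: "(\<Sum>j<?c. if y j \<notin> M then blen y S M rS rM j else 0) = c0" for rM
    unfolding c0_def by (intro sum.cong) (auto simp: blen_def)
  have Bsplit: "bstart y S M rS rM ?c = c0 + m * rM" for rM
  proof -
    have "bstart y S M rS rM ?c = (\<Sum>j<?c. (if y j \<in> M then rM else 0) + (if y j \<notin> M then blen y S M rS rM j else 0))"
      unfolding bstart_def using assms(1) by (intro sum.cong) (auto simp: blen_def)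
    also have "\<dots> = (\<Sum>j<?c. if y j \<in> M then rM else 0) + c0" by (simp add: sum.distrib c0_eq)
    also have "(\<Sum>j<?c. if y j \<in> M then rM else 0) = m * rM"
      unfolding m_def by (subst sum.inter_filter[symmetric]) auto
    finally show ?thesis by simp
  qed
  have c0_bound: "c0 \<le> rS + (?c - 2)"
  proof -
    let ?f = "\<lambda>j. if y j \<notin> M then blen y S M rS 1 j else 0"
    have c0pos: "0 < ?c" using cS by simp
    have "{..<?c} = insert 0 {1..<?c}" using c0pos by auto
    hence "c0 = ?f 0 + sum ?f {1..<?c}" unfolding c0_def by simp
    also have "?f 0 = rS" using assms(1,4) by (auto simp: blen_def)
    also have "sum ?f {1..<?c} = ?f ?h + sum ?f ({1..<?c} - {?h})"
      using h0 cS by (intro sum.remove) auto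
    also have "?f ?h = 0" using hM by simp
    also have "sum ?f ({1..<?c} - {?h}) \<le> card ({1..<?c} - {?h})"
    proof -
      have "\<And>j. j \<in> {1..<?c} - {?h} \<Longrightarrow> ?f j \<le> 1" using noS2 by (auto simp: blen_def)
      thus ?thesis using sum_bounded_above[of "{1..<?c} - {?h}" ?f 1] by simp
    qed
    also have "card ({1..<?c} - {?h}) = ?c - 2" using h0 cS by simp
    finally show ?thesis by simp
  qed
  have m1: "1 \<le> m"
  proof -
    have "{?h} \<subseteq> {j \<in> {..<?c}. y j \<in> M}" using hM cS by auto
    hence "card {?h} \<le> m" unfolding m_def by (intro card_mono) auto
    thus ?thesis by simp
  qed
  have mc: "m \<le> ?c" unfolding m_def
    using card_mono[of "{..<?c}" "{j \<in> {..<?c}. y j \<in> M}"] by auto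
  have ex: "\<exists>k. 7*T \<le> c0 + m * 2^k"
  proof
    have "7*T < 2^(7*T)" by (rule less_exp)
    also have "\<dots> \<le> m * 2^(7*T)" using m1 by simp
    finally show "7*T \<le> c0 + m * 2^(7*T)" by simp
  qed
  define k where "k = (LEAST k. 7*T \<le> c0 + m*2^k)"
  have k1: "7*T \<le> c0 + m * 2^k" unfolding k_def using ex by (rule LeastI_ex)
  have k0: "k > 0"
  proof (rule ccontr)
    assume "\<not> k > 0"
    hence "k = 0" by simp
    with k1 have "7*T \<le> c0 + m" by simp
    with c0_bound mc assms(7) rSq q q1 show False by linarith
  qed
  have k2: "\<not> 7*T \<le> c0 + m*2^(k-1)" unfolding k_def
    by (rule not_less_Least) (use k0 k_def in simp)
  have "m * 2^k = 2 * (m * 2^(k-1))" using k0 by (cases k) auto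
  hence P14: "c0 + m * 2^k < 14 * T" using k2 by linarith
  have pow: "2^k < 14*T"
  proof -
    have "(2::nat)^k \<le> m * 2^k" using m1 by simp
    thus ?thesis using P14 by linarith
  qed
  have kin: "int k \<le> \<lceil>log 2 (14 * real T)\<rceil>"
  proof -
    have "real (2^k) < real (14*T)" using pow by linarith
    hence "2 powr real k < 14 * real T" by (simp add: powr_realpow)
    hence "real k < log 2 (14 * real T)" using assms(2)
      by (subst less_log_iff) auto
    hence "real_of_int (int k) \<le> real_of_int \<lceil>log 2 (14 * real T)\<rceil>"
      using le_of_int_ceiling[of "log 2 (14 * real T)"] by linarith
    thus ?thesis by (simp only: of_int_le_iff)
  qed
  let ?rM = "(2::nat)^k"
  let ?P = "bstart y S M rS ?rM ?c"
  have P: "?P = c0 + m * 2^k" by (rule Bsplit)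
  have blc: "blen y S M rS ?rM ?c = rS" using cS by (simp add: blen_def)
  have Sc: "real (Scount y S M (T div 2) ?rM (7 * T) (15 * T)) \<ge> real T / 4"
  proof -
    have sub: "{?P..<?P + rS} \<subseteq> {t \<in> {7*T..15*T}. gamma y S M rS ?rM t \<in> S}"
    proof
      fix t assume t: "t \<in> {?P..<?P + rS}"
      have "gamma y S M rS ?rM t = y ?c"
        using t blc by (intro gamma_block) (auto simp: bstart_Suc)
      moreover have "t \<in> {7*T..15*T}" using t P P14 k1 rSq q by auto
      ultimately show "t \<in> {t \<in> {7*T..15*T}. gamma y S M rS ?rM t \<in> S}" using cS by simp
    qed
    have "card {?P..<?P + rS} \<le> Scount y S M (T div 2) ?rM (7 * T) (15 * T)"
      unfolding Scount_def rS_def[symmetric] by (rule card_mono) (use sub in auto)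
    hence "rS \<le> Scount y S M (T div 2) ?rM (7 * T) (15 * T)" by simp
    thus ?thesis using rSq q by simp
  qed
  have Mc: "real (Mcount y S M (T div 2) ?rM 0 (2 * T)) \<ge> real T / 2"
  proof -
    let ?g = "gamma y S M rS ?rM"
    let ?A = "{t \<in> {0..2*T}. ?g t \<in> M}"
    let ?N = "{t \<in> {0..2*T}. ?g t \<notin> M}"
    have "card (?A \<union> ?N) = card ?A + card ?N" by (rule card_Un_disjoint) auto
    moreover have "?A \<union> ?N = {0..2*T}" by auto
    ultimately have s: "card ?A + card ?N = 2*T + 1" by simp
    have "?N \<subseteq> {t \<in> {..<?P}. \<not> (?g t \<in> M)}" using P k1 q q1 by auto
    hence "card ?N \<le> card {t \<in> {..<?P}. \<not> (?g t \<in> M)}" by (intro card_mono) auto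
    also have "\<dots> = c0" using count_lt[where P="\<lambda>x. x \<notin> M" and y=y and S=S and M=M and rS=rS and rM="?rM" and b="?c"] c0_eq by simp
    finally have "card ?N \<le> rS + (?c - 2)" using c0_bound by simp
    hence "card ?A \<ge> q" using s rSq q assms(7) by linarith
    thus ?thesis unfolding Mcount_def rS_def[symmetric] using q by simp
  qed
  show ?thesis using Sc Mc kin by blast
qed

end
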